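(* Assume the block-sparse setting described in the context, with adversarial noise satisfying $\|w\|_2\le\varepsilon$ for a known constant $\varepsilon>0$, and assume $x\neq 0$. Suppose that $$(1-(d-1)\nu)\,x_{\min} > 2\varepsilon\sqrt{1+(d-1)\nu} + (2k-1)\,d\,\mu_B\,x_{\min}.$$ Then the BOMP algorithm selects all elements of $S=\mathrm{supp}(x)$ among its chosen indices $\{i_1,\dots,i_k\}$, and its output satisfies $$\|\hat x_{\mathrm{BOMP}}-x\|_2^2 \le \frac{\varepsilon^2}{1-(d-1)\nu-(k-1)d\mu_B}.$$
   Context: Setting: $N=Md$. For $v\in\mathbb{C}^N$, $v[i]=(v_{(i-1)d+1},\dots,v_{id})^T$ is its $i$-th block ($1\le i\le M$); for a matrix $A$ with $N$ columns, $A[i]$ is the submatrix of columns $(i-1)d+1,\dots,id$. The (block) support is $\mathrm{supp}(v)=\{i: v[i]\neq 0\}$. For an index set $I=\{i_1<\dots<i_p\}$, $v_I$ is the concatenation of the blocks $v[i_1],\dots,v[i_p]$ and $A_I=[A[i_1],\dots,A[i_p]]$. The unknown deterministic vector $x\in\mathbb{C}^N$ has at most $k$ nonzero blocks (with $k$ known); $S=\mathrm{supp}(x)$, $s=|S|$, $x_{\max}=\max_{i\in S}\|x[i]\|_2$, $x_{\min}=\min_{i\in S}\|x[i]\|_2$. Observations are $y=Dx+w$ where $D\in\mathbb{C}^{L\times N}$ is known with columns $d_1,\dots,d_N$ of unit $\ell_2$ norm, $L<N$, and $D_I$ has full column rank for every index set $I$ with $|I|\le k$. Block coherence: $\mu_B=\max_{i\neq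 j}\frac1d\|D[i]^*D[j]\|$ (spectral norm). Sub-coherence: $\nu=\max_{1\le \ell\le M}\max_{(\ell-1)d+1\le i\neq j\le \ell d}|d_i^*d_j|$. BOMP algorithm: set $r^0=y$. For $\ell=1,\dots,k$: choose $i_\ell\in\arg\max_{i}\|D[i]^*r^{\ell-1}\|_2$ (ties broken arbitrarily); let $x^\ell$ be a minimizer of $\|y-D\tilde x\|_2$ over $\tilde x$ with $\mathrm{supp}(\tilde x)\subseteq\{i_1,\dots,i_\ell\}$; set $r^\ell=y-Dx^\ell$. Output $\hat x_{\mathrm{BOMP}}=x^k$. *)

theory Defs
  imports Complex_Main
begin

text \<open>Vectors in C^n are functions nat => complex, only the entries
  with index < n are meaningful (0-based indexing). A matrix with L rows and
  N columns is a function nat => nat => complex (row, column), entries with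
  row < L and column < N meaningful. Block number i (0-based, 0 <= i < M)
  of a vector of length N = M*d consists of the indices i*d, ..., (i+1)*d - 1;
  it corresponds to block i+1 of the paper.\<close>

definition blk :: "nat \<Rightarrow> nat \<Rightarrow> nat set" where
  "blk d i = {i * d ..< (i + 1) * d}"

definition vnorm :: "nat set \<Rightarrow> (nat \<Rightarrow> complex) \<Rightarrow> real" where
  "vnorm A v = sqrt (\<Sum>j\<in>A. (cmod (v j))\<^sup>2)"

definition bsupp :: "nat \<Rightarrow> nat \<Rightarrow> (nat \<Rightarrow> complex) \<Rightarrow> nat set" where
  "bsupp M d v = {i. i < M \<and> (\<exists>j\<in>blk d i. v j \<noteq> 0)}"

definition mulv :: "nat \<Rightarrow> (nat \<Rightarrow> nat \<Rightarrow> complex) \<Rightarrow> (nat \<Rightarrow> complex) \<Rightarrow> (nat \<Rightarrow> complex)" where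
  "mulv N D v = (\<lambda>q. \<Sum>c<N. D q c * v c)"

definition bcorr :: "nat \<Rightarrow> nat \<Rightarrow> (nat \<Rightarrow> nat \<Rightarrow> complex) \<Rightarrow> (nat \<Rightarrow> complex) \<Rightarrow> nat \<Rightarrow> (nat \<Rightarrow> complex)" where
  "bcorr L d D r i = (\<lambda>a. \<Sum>q<L. cnj (D q (i * d + a)) * r q)"

definition bgram :: "nat \<Rightarrow> nat \<Rightarrow> (nat \<Rightarrow> nat \<Rightarrow> complex) \<Rightarrow> nat \<Rightarrow> nat \<Rightarrow> (nat \<Rightarrow> nat \<Rightarrow> complex)" where
  "bgram L d D i j = (\<lambda>a b. \<Sum>q<L. cnj (D q (i * d + a)) * D q (j * d + b))"

definition spec_norm :: "nat \<Rightarrow> (nat \<Rightarrow> nat \<Rightarrow> complex) \<Rightarrow> real" where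
  "spec_norm n A = Sup {vnorm {..<n} (\<lambda>a. \<Sum>b<n. A a b * u b) | u. vnorm {..<n} u = 1}"

text \<open>Block coherence mu_B (maximum over i ~= j; the extra 0 only makes the
  maximum well defined when M = 1, where it is the natural value).\<close>
definition block_coherence :: "nat \<Rightarrow> nat \<Rightarrow> nat \<Rightarrow> (nat \<Rightarrow> nat \<Rightarrow> complex) \<Rightarrow> real" where
  "block_coherence L M d D =
     Max ({0} \<union> {spec_norm d (bgram L d D i j) / real d | i j. i < M \<and> j < M \<and> i \<noteq> j})"

text \<open>Sub-coherence nu (maximum over distinct columns within a block; the extra 0
  only matters when d = 1).\<close>
definition sub_coherence :: "nat \<Rightarrow> nat \<Rightarrow> nat \<Rightarrow> (nat \<Rightarrow> nat \<Rightarrow> complex) \<Rightarrow> real" where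
  "sub_coherence L M d D =
     Max ({0} \<union> {cmod (\<Sum>q<L. cnj (D q a) * D q b) | a b l.
                   l < M \<and> a \<in> blk d l \<and> b \<in> blk d l \<and> a \<noteq> b})"

text \<open>A valid run of BOMP (with any tie breaking and any choice of least-squares
  minimizer): idx l is the block chosen at step l (1 <= l <= k), xs l is the
  estimate x^l, and xs 0 = 0, so that the residual r^l = y - D x^l and r^0 = y.
  The output is xs k.\<close>
definition bomp_run :: "nat \<Rightarrow> nat \<Rightarrow> nat \<Rightarrow> (nat \<Rightarrow> nat \<Rightarrow> complex) \<Rightarrow> nat \<Rightarrow>
    (nat \<Rightarrow> complex) \<Rightarrow> (nat \<Rightarrow> nat) \<Rightarrow> (nat \<Rightarrow> nat \<Rightarrow> complex) \<Rightarrow> bool" where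
  "bomp_run L M d D k y idx xs \<longleftrightarrow>
     xs 0 = (\<lambda>_. 0) \<and>
     (\<forall>l \<in> {1..k}.
        let r = (\<lambda>q. y q - mulv (M * d) D (xs (l - 1)) q);
            T = idx ` {1..l};
            admissible = (\<lambda>z::nat \<Rightarrow> complex. \<forall>c. (c \<ge> M * d \<or> c div d \<notin> T) \<longrightarrow> z c = 0)
        in idx l < M \<and>
           (\<forall>i<M. vnorm {..<d} (bcorr L d D r i) \<le> vnorm {..<d} (bcorr L d D r (idx l))) \<and>
           admissible (xs l) \<and>
           (\<forall>z. admissible z \<longrightarrow>
              vnorm {..<L} (\<lambda>q. y q - mulv (M * d) D (xs l) q)
                \<le> vnorm {..<L} (\<lambda>q. y q - mulv (M * d) D z q)))"

end

theory Submission
  imports Defs "HOL-Analysis.L2_Norm" "HOL-Analysis.Convex"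
begin


definition cip :: "nat \<Rightarrow> (nat \<Rightarrow> complex) \<Rightarrow> (nat \<Rightarrow> complex) \<Rightarrow> complex" where
  "cip n a b = (\<Sum>q<n. cnj (a q) * b q)"

definition nsq :: "nat set \<Rightarrow> (nat \<Rightarrow> complex) \<Rightarrow> real" where
  "nsq A v = (\<Sum>j\<in>A. (cmod (v j))\<^sup>2)"

lemma nsq_nonneg: "nsq A v \<ge> 0" unfolding nsq_def by (simp add: sum_nonneg)

lemma vnorm_nsq: "vnorm A v = sqrt (nsq A v)" unfolding vnorm_def nsq_def ..

lemma vnorm_sq: "(vnorm A v)\<^sup>2 = nsq A v" using nsq_nonneg by (simp add: vnorm_nsq)

lemma vnorm_nonneg: "vnorm A v \<ge> 0" by (simp add: vnorm_nsq nsq_nonneg)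

lemma vnorm_L2: "vnorm A v = L2_set (\<lambda>j. cmod (v j)) A"
  unfolding vnorm_def L2_set_def ..

lemma cip_CS: "cmod (cip n a b) \<le> vnorm {..<n} a * vnorm {..<n} b"
proof -
  have "cmod (cip n a b) \<le> (\<Sum>q<n. cmod (cnj (a q) * b q))"
    unfolding cip_def by (rule norm_sum)
  also have "\<dots> = (\<Sum>q<n. \<bar>cmod (a q)\<bar> * \<bar>cmod (b q)\<bar>)" by (simp add: norm_mult)
  also have "\<dots> \<le> vnorm {..<n} a * vnorm {..<n} b"
    unfolding vnorm_L2 by (rule L2_set_mult_ineq)
  finally show ?thesis .
qed

lemma cip_self: "cip n a a = complex_of_real (nsq {..<n} a)"
  unfolding cip_def nsq_def of_real_sum by (rule sum.cong) (auto simp: mult.commute complex_norm_square[symmetric] of_real_power)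

lemma shift_sum: fixes i d :: nat and f :: "nat \<Rightarrow> 'a::comm_monoid_add" shows "(\<Sum>c\<in>{i*d..<i*d+d}. f c) = (\<Sum>b<d. f (i*d+b))"
proof -
  have "(\<Sum>c\<in>{0+i*d..<d+i*d}. f c) = (\<Sum>b\<in>{0..<d}. f (b+i*d))"
    by (rule sum.shift_bounds_nat_ivl)
  then show ?thesis by (simp add: lessThan_atLeast0 add.commute)
qed

lemma block_sum: fixes f :: "nat \<Rightarrow> 'a::comm_monoid_add" shows "(\<Sum>c<M*d. f c) = (\<Sum>i<M. \<Sum>b<d. f (i*d+b))"
proof -
  have "(\<Sum>c<M*d. f c) = (\<Sum>i<M. \<Sum>c\<in>{i*d..<i*d+d}. f c)"
    using sum.nat_group[of f d M] by simp
  also have "\<dots> = (\<Sum>i<M. \<Sum>b<d. f (i*d+b))"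
  proof (rule sum.cong[OF refl])
    fix i
    show "(\<Sum>c\<in>{i*d..<i*d+d}. f c) = (\<Sum>b<d. f (i*d+b))"
      by (rule shift_sum)
  qed
  finally show ?thesis .
qed

lemma blk_sum: "(\<Sum>c\<in>blk d i. f c) = (\<Sum>b<d. f (i*d+b))"
  unfolding blk_def using shift_sum[of f i d] by (simp add: add.commute)



definition Bv :: "nat \<Rightarrow> (nat\<Rightarrow>nat\<Rightarrow>complex) \<Rightarrow> nat \<Rightarrow> (nat\<Rightarrow>complex) \<Rightarrow> (nat\<Rightarrow>complex)" where
  "Bv d D i a = (\<lambda>q. \<Sum>b<d. D q (i*d+b) * a b)"

definition bv :: "nat \<Rightarrow> (nat\<Rightarrow>complex) \<Rightarrow> nat \<Rightarrow> (nat\<Rightarrow>complex)" where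
  "bv d v i = (\<lambda>b. v (i*d+b))"

lemma adj: "(\<Sum>a'<d. cnj (a a') * bcorr L d D r i a') = cip L (Bv d D i a) r"
proof -
  have "(\<Sum>a'<d. cnj (a a') * bcorr L d D r i a') = (\<Sum>a'<d. \<Sum>q<L. cnj (a a') * (cnj (D q (i * d + a')) * r q))"
    unfolding bcorr_def by (simp add: sum_distrib_left)
  also have "\<dots> = (\<Sum>q<L. \<Sum>a'<d. cnj (a a') * (cnj (D q (i * d + a')) * r q))"
    by (rule sum.swap)
  also have "\<dots> = cip L (Bv d D i a) r"
    unfolding cip_def Bv_def by (simp add: sum_distrib_right sum_distrib_left ac_simps)
  finally show ?thesis .
qed

lemma gramid: "bcorr L d D (Bv d D j b) i a' = (\<Sum>b'<d. bgram L d D i j a' b' * b b')"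
proof -
  have "bcorr L d D (Bv d D j b) i a' = (\<Sum>q<L. \<Sum>b'<d. cnj (D q (i * d + a')) * D q (j*d+b') * b b')"
    unfolding bcorr_def Bv_def by (simp add: sum_distrib_left ac_simps)
  also have "\<dots> = (\<Sum>b'<d. \<Sum>q<L. cnj (D q (i * d + a')) * D q (j*d+b') * b b')"
    by (rule sum.swap)
  also have "\<dots> = (\<Sum>b'<d. bgram L d D i j a' b' * b b')"
    unfolding bgram_def by (simp add: sum_distrib_right)
  finally show ?thesis .
qed

lemma vnorm_blk: "vnorm (blk d i) v = vnorm {..<d} (bv d v i)"
  unfolding vnorm_def bv_def blk_sum ..

lemma nsq_blk: "nsq (blk d i) v = nsq {..<d} (bv d v i)"
  unfolding nsq_def bv_def blk_sum ..

lemma mulv_dec: "mulv (M*d) D v q = (\<Sum>i<M. Bv d D i (bv d v i) q)"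
  unfolding mulv_def Bv_def bv_def by (rule block_sum)

lemma nsq_mono: assumes "\<And>j. j \<in> A \<Longrightarrow> cmod (u j) \<le> cmod (v j)" shows "nsq A u \<le> nsq A v"
  unfolding nsq_def by (rule sum_mono) (use assms in \<open>auto intro: power_mono\<close>)

lemma vnorm_mono: assumes "\<And>j. j \<in> A \<Longrightarrow> cmod (u j) \<le> cmod (v j)" shows "vnorm A u \<le> vnorm A v"
  unfolding vnorm_nsq using nsq_mono[OF assms] by simp

lemma nsq_zero: assumes "finite A" "nsq A u = 0" "j \<in> A" shows "u j = 0"
proof -
  have "(cmod (u j))\<^sup>2 = 0"
    using assms sum_nonneg_eq_0_iff[of A "\<lambda>j. (cmod (u j))\<^sup>2"] unfolding nsq_def by auto
  then show ?thesis by simp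
qed

lemma nsq_scale: "nsq A (\<lambda>j. c * u j) = (cmod c)\<^sup>2 * nsq A u"
  unfolding nsq_def by (simp add: norm_mult power_mult_distrib sum_distrib_left)

lemma vnorm_scale: "vnorm A (\<lambda>j. c * u j) = cmod c * vnorm A u"
  unfolding vnorm_nsq nsq_scale by (simp add: real_sqrt_mult)

lemma spec_bound:
  assumes n1: "n \<ge> 1"
  shows "vnorm {..<n} (\<lambda>a. \<Sum>b<n. A a b * u b) \<le> spec_norm n A * vnorm {..<n} u"
proof -
  define S where "S = {vnorm {..<n} (\<lambda>a. \<Sum>b<n. A a b * u b) | u. vnorm {..<n} u = 1}"
  define K where "K = vnorm {..<n} (\<lambda>a. of_real (\<Sum>b<n. cmod (A a b)))"
  have bdd: "bdd_above S"
  proof (rule bdd_aboveI)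
    fix s assume "s \<in> S"
    then obtain u where u1: "vnorm {..<n} u = 1" and s: "s = vnorm {..<n} (\<lambda>a. \<Sum>b<n. A a b * u b)"
      unfolding S_def by auto
    have ub: "cmod (u b) \<le> 1" if "b < n" for b
    proof -
      have "(cmod (u b))\<^sup>2 \<le> nsq {..<n} u"
        unfolding nsq_def using that by (intro member_le_sum) auto
      also have "\<dots> = 1" using u1 vnorm_sq[of "{..<n}" u] by simp
      finally show ?thesis by (simp add: power_le_one_iff abs_le_square_iff)
    qed
    show "s \<le> K" unfolding s K_def
    proof (rule vnorm_mono)
      fix a assume "a \<in> {..<n}"
      have "cmod (\<Sum>b<n. A a b * u b) \<le> (\<Sum>b<n. cmod (A a b * u b))" by (rule norm_sum)
      also have "\<dots> \<le> (\<Sum>b<n. cmod (A a b))"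
        by (rule sum_mono) (use ub in \<open>auto simp: norm_mult intro: mult_left_le\<close>)
      also have "\<dots> = cmod (of_real (\<Sum>b<n. cmod (A a b)) :: complex)"
        by (subst norm_of_real) (simp add: sum_nonneg)
      finally show "cmod (\<Sum>b<n. A a b * u b) \<le> cmod (of_real (\<Sum>b<n. cmod (A a b)) :: complex)" .
    qed
  qed
  have snorm: "spec_norm n A = Sup S" unfolding spec_norm_def S_def ..
  have ne: "S \<noteq> {}"
  proof -
    have "(\<Sum>j<n. (cmod (if j=0 then 1 else 0::complex))\<^sup>2) = (\<Sum>j<n. if j = 0 then 1 else 0)"
      by (rule sum.cong) auto
    then have "vnorm {..<n} (\<lambda>b. if b = 0 then 1 else 0) = 1"
      unfolding vnorm_nsq nsq_def using n1 by simp
    then show ?thesis unfolding S_def by blast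
  qed
  have inS: "x \<in> S \<Longrightarrow> x \<le> spec_norm n A" for x
    unfolding snorm using bdd by (simp add: cSup_upper)
  have spos: "spec_norm n A \<ge> 0"
  proof -
    obtain x where "x \<in> S" using ne by auto
    moreover then have "x \<ge> 0" unfolding S_def by (auto simp: vnorm_nonneg)
    ultimately show ?thesis using inS by fastforce
  qed
  show ?thesis
  proof (cases "vnorm {..<n} u = 0")
    case True
    then have "nsq {..<n} u = 0" by (simp add: vnorm_nsq)
    then have "\<And>b. b < n \<Longrightarrow> u b = 0" using nsq_zero[of "{..<n}" u] by auto
    then have "(\<lambda>a. \<Sum>b<n. A a b * u b) = (\<lambda>a. 0)" by auto
    then show ?thesis using True by (simp add: vnorm_def)
  next
    case False
    define c where "c = vnorm {..<n} u"
    have cpos: "c > 0" using False vnorm_nonneg[of "{..<n}" u] unfolding c_def by linarith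
    define u' where "u' = (\<lambda>b. complex_of_real (1/c) * u b)"
    have "cmod (complex_of_real (1/c)) = 1/c" using cpos by (subst norm_of_real) simp
    then have "vnorm {..<n} u' = 1" unfolding u'_def vnorm_scale using cpos c_def by simp
    then have "vnorm {..<n} (\<lambda>a. \<Sum>b<n. A a b * u' b) \<le> spec_norm n A"
      using inS unfolding S_def by blast
    moreover have "(\<lambda>a. \<Sum>b<n. A a b * u' b) = (\<lambda>a. complex_of_real (1/c) * (\<Sum>b<n. A a b * u b))"
      unfolding u'_def by (simp add: sum_distrib_left ac_simps)
    ultimately have "(1/c) * vnorm {..<n} (\<lambda>a. \<Sum>b<n. A a b * u b) \<le> spec_norm n A"
      using cpos by (simp only: vnorm_scale norm_of_real) simp
    then show ?thesis using cpos unfolding c_def[symmetric] by (simp add: field_simps)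
  qed
qed



lemma mu_nonneg: "block_coherence L M d D \<ge> 0"
  unfolding block_coherence_def
proof (rule Max_ge)
  have "{spec_norm d (bgram L d D i j) / real d | i j. i < M \<and> j < M \<and> i \<noteq> j}
     \<subseteq> (\<lambda>(i,j). spec_norm d (bgram L d D i j) / real d) ` ({..<M} \<times> {..<M})" by auto
  then show "finite ({0} \<union> {spec_norm d (bgram L d D i j) / real d | i j. i < M \<and> j < M \<and> i \<noteq> j})"
    using finite_subset by blast
qed simp

lemma mu_bound:
  assumes "i < M" "j < M" "i \<noteq> j" "d \<ge> 1"
  shows "spec_norm d (bgram L d D i j) \<le> real d * block_coherence L M d D"
proof -
  have "{spec_norm d (bgram L d D i j) / real d | i j. i < M \<and> j < M \<and> i \<noteq> j}
     \<subseteq> (\<lambda>(i,j). spec_norm d (bgram L d D i j) / real d) ` ({..<M} \<times> {..<M})" by auto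
  then have fin: "finite ({0} \<union> {spec_norm d (bgram L d D i j) / real d | i j. i < M \<and> j < M \<and> i \<noteq> j})"
    using finite_subset by blast
  have "spec_norm d (bgram L d D i j) / real d \<le> block_coherence L M d D"
    unfolding block_coherence_def by (rule Max_ge[OF fin]) (use assms in blast)
  then show ?thesis using assms by (simp add: field_simps)
qed

lemma nu_fin: "finite ({0} \<union> {cmod (\<Sum>q<L. cnj (D q a) * D q b) | a b l.
                   l < M \<and> a \<in> blk d l \<and> b \<in> blk d l \<and> a \<noteq> b})"
proof -
  have le: "a < M * d" if "l < M" "a \<in> blk d l" for a l
  proof -
    have "a < (l+1)*d" using that unfolding blk_def by auto
    also have "\<dots> \<le> M * d" using that by (intro mult_right_mono) auto
    finally show ?thesis .
  qed
  have "{cmod (\<Sum>q<L. cnj (D q a) * D q b) | a b l.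
                   l < M \<and> a \<in> blk d l \<and> b \<in> blk d l \<and> a \<noteq> b}
     \<subseteq> (\<lambda>(a,b). cmod (\<Sum>q<L. cnj (D q a) * D q b)) ` ({..<M*d} \<times> {..<M*d})"
    using le by fastforce
  then show ?thesis using finite_subset by blast
qed

lemma nu_nonneg: "sub_coherence L M d D \<ge> 0"
  unfolding sub_coherence_def by (rule Max_ge[OF nu_fin]) simp

lemma nu_bound:
  assumes "l < M" "a < d" "b < d" "a \<noteq> b"
  shows "cmod (bgram L d D l l a b) \<le> sub_coherence L M d D"
proof -
  have "l*d + a \<in> blk d l" "l*d + b \<in> blk d l" using assms unfolding blk_def by auto
  then have "cmod (\<Sum>q<L. cnj (D q (l*d+a)) * D q (l*d+b)) \<in> {cmod (\<Sum>q<L. cnj (D q a) * D q b) | a b l.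
                   l < M \<and> a \<in> blk d l \<and> b \<in> blk d l \<and> a \<noteq> b}"
    using assms by (intro CollectI exI[of _ "l*d+a"] exI[of _ "l*d+b"] exI[of _ l]) auto
  then show ?thesis unfolding sub_coherence_def bgram_def
    by (intro Max_ge[OF nu_fin]) blast
qed

lemma cip_Bv: "cip L (Bv d D i a) (Bv d D j b) = cip d a (\<lambda>a'. \<Sum>b'<d. bgram L d D i j a' b' * b b')"
proof -
  have "cip L (Bv d D i a) (Bv d D j b) = (\<Sum>a'<d. cnj (a a') * bcorr L d D (Bv d D j b) i a')"
    by (rule adj[symmetric])
  also have "\<dots> = cip d a (\<lambda>a'. \<Sum>b'<d. bgram L d D i j a' b' * b b')"
    unfolding gramid cip_def ..
  finally show ?thesis .
qed

lemma cross:
  assumes "i < M" "j < M" "i \<noteq> j" "d \<ge> 1"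
  shows "cmod (cip L (Bv d D i a) (Bv d D j b)) \<le> real d * block_coherence L M d D * vnorm {..<d} a * vnorm {..<d} b"
proof -
  have "cmod (cip L (Bv d D i a) (Bv d D j b)) \<le> vnorm {..<d} a * vnorm {..<d} (\<lambda>a'. \<Sum>b'<d. bgram L d D i j a' b' * b b')"
    unfolding cip_Bv by (rule cip_CS)
  also have "\<dots> \<le> vnorm {..<d} a * (spec_norm d (bgram L d D i j) * vnorm {..<d} b)"
    by (intro mult_left_mono spec_bound) (use assms vnorm_nonneg in auto)
  also have "\<dots> \<le> vnorm {..<d} a * (real d * block_coherence L M d D * vnorm {..<d} b)"
    by (intro mult_left_mono mult_right_mono mu_bound) (use assms vnorm_nonneg in auto)
  finally show ?thesis by (simp add: ac_simps)
qed

lemma sum_abs_sq: "(\<Sum>a'<d. cmod (a a'))\<^sup>2 \<le> real d * nsq {..<d} a"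
  using Cauchy_Schwarz_ineq_sum[of "\<lambda>_. 1::real" "\<lambda>a'. cmod (a a')" "{..<d}"]
  unfolding nsq_def by simp



lemma self_gram:
  assumes iM: "i < M" and unit: "\<forall>c<M*d. vnorm {..<L} (\<lambda>q. D q c) = 1"
  shows "\<bar>nsq {..<L} (Bv d D i a) - nsq {..<d} a\<bar> \<le> (real d - 1) * sub_coherence L M d D * nsq {..<d} a"
proof -
  define g where "g = bgram L d D i i"
  define \<nu> where "\<nu> = sub_coherence L M d D"
  have nu0: "\<nu> \<ge> 0" unfolding \<nu>_def by (rule nu_nonneg)
  have diag: "g a' a' = 1" if "a' < d" for a'
  proof -
    have "i*d + a' < (i+1)*d" using that by simp
    also have "\<dots> \<le> M*d" using iM by (intro mult_right_mono) auto
    finally have "vnorm {..<L} (\<lambda>q. D q (i*d+a')) = 1" using unit by auto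
    then have "nsq {..<L} (\<lambda>q. D q (i*d+a')) = 1" using vnorm_sq[of "{..<L}" "\<lambda>q. D q (i*d+a')"] by simp
    then show ?thesis unfolding g_def bgram_def using cip_self[of L "\<lambda>q. D q (i*d+a')"]
      unfolding cip_def by simp
  qed
  define E where "E = (\<Sum>a'<d. cnj (a a') * (\<Sum>b'\<in>{..<d}-{a'}. g a' b' * a b'))"
  have "complex_of_real (nsq {..<L} (Bv d D i a)) = cip L (Bv d D i a) (Bv d D i a)"
    by (simp add: cip_self)
  also have "\<dots> = (\<Sum>a'<d. cnj (a a') * (\<Sum>b'<d. g a' b' * a b'))"
    unfolding cip_Bv by (simp add: cip_def g_def)
  also have "\<dots> = (\<Sum>a'<d. cnj (a a') * (g a' a' * a a' + (\<Sum>b'\<in>{..<d}-{a'}. g a' b' * a b')))"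
    proof (rule sum.cong[OF refl])
    fix a' assume "a' \<in> {..<d}"
    then show "cnj (a a') * (\<Sum>b'<d. g a' b' * a b') = cnj (a a') * (g a' a' * a a' + (\<Sum>b'\<in>{..<d}-{a'}. g a' b' * a b'))"
      by (subst sum.remove[of "{..<d}" a']) auto
  qed
  also have "\<dots> = (\<Sum>a'<d. cnj (a a') * a a') + E"
    proof -
    have "(\<Sum>a'<d. cnj (a a') * (g a' a' * a a' + (\<Sum>b'\<in>{..<d}-{a'}. g a' b' * a b')))
      = (\<Sum>a'<d. cnj (a a') * a a' + cnj (a a') * (\<Sum>b'\<in>{..<d}-{a'}. g a' b' * a b'))"
      by (rule sum.cong[OF refl]) (simp add: diag distrib_left)
    then show ?thesis unfolding E_def by (simp only: sum.distrib)
  qed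
  also have "(\<Sum>a'<d. cnj (a a') * a a') = complex_of_real (nsq {..<d} a)"
    using cip_self[of d a] unfolding cip_def .
  finally have eq: "complex_of_real (nsq {..<L} (Bv d D i a)) = complex_of_real (nsq {..<d} a) + E" .
  define S where "S = (\<Sum>a'<d. cmod (a a'))"
  have "cmod E \<le> (\<Sum>a'<d. cmod (cnj (a a') * (\<Sum>b'\<in>{..<d}-{a'}. g a' b' * a b')))"
    unfolding E_def by (rule norm_sum)
  also have "\<dots> \<le> (\<Sum>a'<d. cmod (a a') * (\<Sum>b'\<in>{..<d}-{a'}. \<nu> * cmod (a b')))"
  proof (rule sum_mono)
    fix a' assume a': "a' \<in> {..<d}"
    have "cmod (\<Sum>b'\<in>{..<d}-{a'}. g a' b' * a b') \<le> (\<Sum>b'\<in>{..<d}-{a'}. cmod (g a' b' * a b'))"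
      by (rule norm_sum)
    also have "\<dots> \<le> (\<Sum>b'\<in>{..<d}-{a'}. \<nu> * cmod (a b'))"
    proof (rule sum_mono)
      fix b' assume "b' \<in> {..<d}-{a'}"
      then have "cmod (g a' b') \<le> \<nu>" unfolding g_def \<nu>_def using a' iM
        by (intro nu_bound) auto
      then show "cmod (g a' b' * a b') \<le> \<nu> * cmod (a b')"
        by (simp add: norm_mult mult_right_mono)
    qed
    finally show "cmod (cnj (a a') * (\<Sum>b'\<in>{..<d}-{a'}. g a' b' * a b')) \<le> cmod (a a') * (\<Sum>b'\<in>{..<d}-{a'}. \<nu> * cmod (a b'))"
      by (simp add: norm_mult mult_left_mono)
  qed
  also have "\<dots> = \<nu> * (\<Sum>a'<d. cmod (a a') * (S - cmod (a a')))"
    proof -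
    have "(\<Sum>a'<d. cmod (a a') * (\<Sum>b'\<in>{..<d}-{a'}. \<nu> * cmod (a b'))) = (\<Sum>a'<d. \<nu> * (cmod (a a') * (S - cmod (a a'))))"
    proof (rule sum.cong[OF refl])
      fix a' assume a': "a' \<in> {..<d}"
      have "S = cmod (a a') + (\<Sum>b'\<in>{..<d}-{a'}. cmod (a b'))"
        unfolding S_def using a' by (subst sum.remove[of "{..<d}" a']) auto
      then have "(\<Sum>b'\<in>{..<d}-{a'}. \<nu> * cmod (a b')) = \<nu> * (S - cmod (a a'))"
        by (simp add: sum_distrib_left[symmetric])
      then show "cmod (a a') * (\<Sum>b'\<in>{..<d}-{a'}. \<nu> * cmod (a b')) = \<nu> * (cmod (a a') * (S - cmod (a a')))"
        by simp
    qed
    then show ?thesis by (simp only: sum_distrib_left)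
  qed
  also have "(\<Sum>a'<d. cmod (a a') * (S - cmod (a a'))) = S\<^sup>2 - nsq {..<d} a"
    proof -
    have "(\<Sum>a'<d. cmod (a a') * (S - cmod (a a'))) = (\<Sum>a'<d. cmod (a a') * S - (cmod (a a'))\<^sup>2)"
      by (rule sum.cong[OF refl]) (simp add: right_diff_distrib power2_eq_square)
    also have "\<dots> = S * S - nsq {..<d} a"
      unfolding nsq_def sum_subtractf sum_distrib_right[symmetric] S_def ..
    finally show ?thesis by (simp add: power2_eq_square)
  qed
  also have "\<nu> * (S\<^sup>2 - nsq {..<d} a) \<le> \<nu> * (real d * nsq {..<d} a - nsq {..<d} a)"
    using sum_abs_sq[where a=a and d=d] nu0 unfolding S_def by (intro mult_left_mono) auto
  finally have "cmod E \<le> (real d - 1) * \<nu> * nsq {..<d} a" by (simp add: algebra_simps)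
  moreover have "cmod E = \<bar>nsq {..<L} (Bv d D i a) - nsq {..<d} a\<bar>"
  proof -
    have "E = complex_of_real (nsq {..<L} (Bv d D i a) - nsq {..<d} a)" using eq by simp
    then show ?thesis by (simp only: norm_of_real)
  qed
  ultimately show ?thesis unfolding \<nu>_def by simp
qed



definition supp_on :: "nat \<Rightarrow> nat \<Rightarrow> nat set \<Rightarrow> (nat \<Rightarrow> complex) \<Rightarrow> bool" where
  "supp_on M d I v \<longleftrightarrow> (\<forall>c. (c \<ge> M * d \<or> c div d \<notin> I) \<longrightarrow> v c = 0)"

lemma cip_sum_right: "cip n a (\<lambda>q. \<Sum>i\<in>I. f i q) = (\<Sum>i\<in>I. cip n a (f i))"
  unfolding cip_def by (simp add: sum_distrib_left sum.swap[of _ I])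

lemma cip_sum_left: "cip n (\<lambda>q. \<Sum>i\<in>I. f i q) b = (\<Sum>i\<in>I. cip n (f i) b)"
  unfolding cip_def by (simp add: sum_distrib_right sum.swap[of _ I])

lemma cip_add_right: "cip n a (\<lambda>q. f q + g q) = cip n a f + cip n a g"
  unfolding cip_def by (simp add: distrib_left sum.distrib)

lemma cip_cong: "(\<And>q. q < n \<Longrightarrow> b q = b' q) \<Longrightarrow> cip n a b = cip n a b'"
  unfolding cip_def by simp

lemma nsq_cong: "(\<And>q. q \<in> A \<Longrightarrow> b q = b' q) \<Longrightarrow> nsq A b = nsq A b'"
  unfolding nsq_def by simp

lemma Re_cip_self: "Re (cip n a a) = nsq {..<n} a"
  by (simp add: cip_self)

context
  fixes L M d :: nat and D :: "nat \<Rightarrow> nat \<Rightarrow> complex"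
  assumes d1: "d \<ge> 1" and unit: "\<forall>c<M*d. vnorm {..<L} (\<lambda>q. D q c) = 1"
begin

abbreviation "nu \<equiv> sub_coherence L M d D"
abbreviation "mu \<equiv> block_coherence L M d D"

lemma Bv_lower: "i < M \<Longrightarrow> nsq {..<L} (Bv d D i a) \<ge> (1 - (real d - 1) * nu) * nsq {..<d} a"
  using self_gram[of i M d L D a] unit by (auto simp: algebra_simps abs_le_iff)

lemma Bv_upper_sq: "i < M \<Longrightarrow> nsq {..<L} (Bv d D i a) \<le> (1 + (real d - 1) * nu) * nsq {..<d} a"
  using self_gram[of i M d L D a] unit by (auto simp: algebra_simps abs_le_iff)

lemma Bv_upper: "i < M \<Longrightarrow> vnorm {..<L} (Bv d D i a) \<le> sqrt (1 + (real d - 1) * nu) * vnorm {..<d} a"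
  unfolding vnorm_nsq real_sqrt_mult[symmetric] using Bv_upper_sq by simp

lemma noise: "i < M \<Longrightarrow> cmod (cip L (Bv d D i a) w) \<le> sqrt (1 + (real d - 1) * nu) * vnorm {..<d} a * vnorm {..<L} w"
  using cip_CS[of L "Bv d D i a" w] Bv_upper[of i a] vnorm_nonneg[of "{..<L}" w]
  by (meson mult_right_mono order_trans)

lemma bv_zero:
  assumes "supp_on M d I v" "i \<notin> I" "b < d"
  shows "bv d v i b = 0"
proof -
  have "(i*d+b) div d = i" using assms d1 by simp
  then show ?thesis using assms unfolding supp_on_def bv_def by auto
qed

lemma dec:
  assumes sup: "supp_on M d I v" and IM: "I \<subseteq> {..<M}"
  shows "mulv (M*d) D v q = (\<Sum>i\<in>I. Bv d D i (bv d v i) q)"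
proof -
  have "mulv (M*d) D v q = (\<Sum>i<M. Bv d D i (bv d v i) q)" by (rule mulv_dec)
  also have "\<dots> = (\<Sum>i\<in>I. Bv d D i (bv d v i) q)"
  proof (rule sum.mono_neutral_right)
    show "\<forall>i\<in>{..<M} - I. Bv d D i (bv d v i) q = 0"
      using bv_zero[OF sup] unfolding Bv_def by auto
  qed (use IM in auto)
  finally show ?thesis .
qed

lemma nsq_total:
  assumes sup: "supp_on M d I v" and IM: "I \<subseteq> {..<M}"
  shows "nsq {..<M*d} v = (\<Sum>i\<in>I. nsq {..<d} (bv d v i))"
proof -
  have "nsq {..<M*d} v = (\<Sum>i<M. nsq {..<d} (bv d v i))"
    unfolding nsq_def bv_def by (rule block_sum)
  also have "\<dots> = (\<Sum>i\<in>I. nsq {..<d} (bv d v i))"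
  proof (rule sum.mono_neutral_right)
    show "\<forall>i\<in>{..<M} - I. nsq {..<d} (bv d v i) = 0"
      using bv_zero[OF sup] unfolding nsq_def by auto
  qed (use IM in auto)
  finally show ?thesis .
qed

end



context
  fixes L M d :: nat and D :: "nat \<Rightarrow> nat \<Rightarrow> complex"
  assumes d1: "d \<ge> 1" and unit: "\<forall>c<M*d. vnorm {..<L} (\<lambda>q. D q c) = 1"
begin

lemma onepnu: "0 \<le> 1 + (real d - 1) * nu L M d D"
proof -
  have "0 \<le> (real d - 1) * nu L M d D" using d1 nu_nonneg[of L M d D] by (intro mult_nonneg_nonneg) auto
  then show ?thesis by simp
qed

lemma E0:
  assumes sup: "supp_on M d S v" and SM: "S \<subseteq> {..<M}"
    and r: "\<And>q. q < L \<Longrightarrow> r q = mulv (M*d) D v q + w q"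
  shows "cip L (Bv d D j a) r = (\<Sum>i\<in>S. cip L (Bv d D j a) (Bv d D i (bv d v i))) + cip L (Bv d D j a) w"
proof -
  have "cip L (Bv d D j a) r = cip L (Bv d D j a) (\<lambda>q. (\<Sum>i\<in>S. Bv d D i (bv d v i) q) + w q)"
    by (rule cip_cong) (simp add: r dec[OF d1 unit sup SM])
  then show ?thesis by (simp add: cip_add_right cip_sum_right)
qed

lemma cross_sum:
  assumes SM: "S \<subseteq> {..<M}" and jM: "j < M" and jS: "j \<notin> S"
    and m: "\<And>i. i \<in> S \<Longrightarrow> vnorm {..<d} (bv d v i) \<le> m"
  shows "cmod (\<Sum>i\<in>S. cip L (Bv d D j a) (Bv d D i (bv d v i)))
      \<le> real (card S) * real d * mu L M d D * vnorm {..<d} a * m"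
proof -
  have "cmod (\<Sum>i\<in>S. cip L (Bv d D j a) (Bv d D i (bv d v i)))
      \<le> (\<Sum>i\<in>S. cmod (cip L (Bv d D j a) (Bv d D i (bv d v i))))" by (rule norm_sum)
  also have "\<dots> \<le> (\<Sum>i\<in>S. real d * mu L M d D * vnorm {..<d} a * m)"
  proof (rule sum_mono)
    fix i assume i: "i \<in> S"
    have "cmod (cip L (Bv d D j a) (Bv d D i (bv d v i))) \<le> real d * mu L M d D * vnorm {..<d} a * vnorm {..<d} (bv d v i)"
      using i SM jM jS d1 by (intro cross) auto
    also have "\<dots> \<le> real d * mu L M d D * vnorm {..<d} a * m"
      using m[OF i] by (intro mult_left_mono) (auto simp: mu_nonneg vnorm_nonneg)
    finally show "cmod (cip L (Bv d D j a) (Bv d D i (bv d v i))) \<le> real d * mu L M d D * vnorm {..<d} a * m" .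
  qed
  also have "\<dots> = real (card S) * real d * mu L M d D * vnorm {..<d} a * m" by simp
  finally show ?thesis .
qed

lemma E3:
  assumes sup: "supp_on M d S v" and SM: "S \<subseteq> {..<M}"
    and r: "\<And>q. q < L \<Longrightarrow> r q = mulv (M*d) D v q + w q"
    and jM: "j < M" and jS: "j \<notin> S"
    and m: "\<And>i. i \<in> S \<Longrightarrow> vnorm {..<d} (bv d v i) \<le> m" and m0: "m \<ge> 0"
  shows "vnorm {..<d} (bcorr L d D r j) \<le> real (card S) * real d * mu L M d D * m + sqrt (1 + (real d - 1) * nu L M d D) * vnorm {..<L} w"
proof -
  define c where "c = bcorr L d D r j"
  define K where "K = real (card S) * real d * mu L M d D * m + sqrt (1 + (real d - 1) * nu L M d D) * vnorm {..<L} w"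
  have "complex_of_real (nsq {..<d} c) = cip d c c" by (simp add: cip_self)
  also have "\<dots> = cip L (Bv d D j c) r" using adj[where a=c and r=r and i=j and d=d and L=L and D=D] unfolding cip_def c_def by simp
  finally have eq: "complex_of_real (nsq {..<d} c) = cip L (Bv d D j c) r" .
  have "nsq {..<d} c = cmod (cip L (Bv d D j c) r)"
    using eq[symmetric] nsq_nonneg[of "{..<d}" c] by simp
  also have "\<dots> \<le> cmod (\<Sum>i\<in>S. cip L (Bv d D j c) (Bv d D i (bv d v i))) + cmod (cip L (Bv d D j c) w)"
  proof -
    have "cip L (Bv d D j c) r = (\<Sum>i\<in>S. cip L (Bv d D j c) (Bv d D i (bv d v i))) + cip L (Bv d D j c) w"
      using E0[OF sup SM] r by blast
    then show ?thesis by (metis norm_triangle_ineq)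
  qed
  also have "\<dots> \<le> real (card S) * real d * mu L M d D * vnorm {..<d} c * m
        + sqrt (1 + (real d - 1) * nu L M d D) * vnorm {..<d} c * vnorm {..<L} w"
    by (intro add_mono cross_sum noise[OF d1 unit] SM jM jS m) auto
  also have "\<dots> = vnorm {..<d} c * K" unfolding K_def by (simp add: algebra_simps)
  finally have "(vnorm {..<d} c)\<^sup>2 \<le> vnorm {..<d} c * K" by (simp add: vnorm_sq)
  then have "vnorm {..<d} c \<le> K \<or> vnorm {..<d} c = 0"
    using vnorm_nonneg[of "{..<d}" c] by (auto simp: power2_eq_square)
  moreover have "K \<ge> 0" unfolding K_def using m0
    by (intro add_nonneg_nonneg mult_nonneg_nonneg) (auto simp: mu_nonneg onepnu vnorm_nonneg)
  ultimately show ?thesis unfolding c_def K_def by auto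
qed

lemma E2:
  assumes sup: "supp_on M d S v" and SM: "S \<subseteq> {..<M}" and fin: "finite S"
    and r: "\<And>q. q < L \<Longrightarrow> r q = mulv (M*d) D v q + w q"
    and iS: "i \<in> S"
    and m: "\<And>j. j \<in> S \<Longrightarrow> vnorm {..<d} (bv d v j) \<le> vnorm {..<d} (bv d v i)"
  shows "vnorm {..<d} (bcorr L d D r i) \<ge> (1 - (real d - 1) * nu L M d D - (real (card S) - 1) * real d * mu L M d D) * vnorm {..<d} (bv d v i)
     - sqrt (1 + (real d - 1) * nu L M d D) * vnorm {..<L} w"
proof -
  define a where "a = bv d v i"
  define mm where "mm = vnorm {..<d} a"
  define c where "c = bcorr L d D r i"
  have iM: "i < M" using iS SM by auto
  have mm0: "mm \<ge> 0" unfolding mm_def by (rule vnorm_nonneg)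
  have "cip L (Bv d D i a) r = cip d a c"
    using adj[where a=a and r=r and i=i and d=d and L=L and D=D] unfolding cip_def c_def by simp
  then have up: "cmod (cip L (Bv d D i a) r) \<le> mm * vnorm {..<d} c"
    unfolding mm_def using cip_CS by metis
  have "cip L (Bv d D i a) r = (\<Sum>j\<in>S. cip L (Bv d D i a) (Bv d D j (bv d v j))) + cip L (Bv d D i a) w"
    using E0[OF sup SM] r by blast
  also have "(\<Sum>j\<in>S. cip L (Bv d D i a) (Bv d D j (bv d v j)))
     = cip L (Bv d D i a) (Bv d D i a) + (\<Sum>j\<in>S-{i}. cip L (Bv d D i a) (Bv d D j (bv d v j)))"
    using fin iS by (subst sum.remove[of S i]) (auto simp: a_def)
  finally have eq: "cip L (Bv d D i a) r = cip L (Bv d D i a) (Bv d D i a) + (\<Sum>j\<in>S-{i}. cip L (Bv d D i a) (Bv d D j (bv d v j))) + cip L (Bv d D i a) w" .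
  have c1: "cmod (\<Sum>j\<in>S-{i}. cip L (Bv d D i a) (Bv d D j (bv d v j))) \<le> real (card (S-{i})) * real d * mu L M d D * mm * mm"
    unfolding mm_def using SM iM m by (intro cross_sum) (auto simp: a_def)
  have cardS: "real (card (S-{i})) = real (card S) - 1" proof -
    have "card S \<ge> 1" using fin iS card_0_eq[of S] by fastforce
    then show ?thesis using fin iS by (simp add: of_nat_diff)
  qed
  have c2: "cmod (cip L (Bv d D i a) w) \<le> sqrt (1 + (real d - 1) * nu L M d D) * mm * vnorm {..<L} w"
    unfolding mm_def by (rule noise[OF d1 unit iM])
  have c3: "Re (cip L (Bv d D i a) (Bv d D i a)) \<ge> (1 - (real d - 1) * nu L M d D) * mm * mm"
    unfolding Re_cip_self mm_def using Bv_lower[OF d1 unit iM, of a] by (simp add: vnorm_sq[symmetric] power2_eq_square)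
  have "Re (cip L (Bv d D i a) r) \<ge> Re (cip L (Bv d D i a) (Bv d D i a)) - cmod (\<Sum>j\<in>S-{i}. cip L (Bv d D i a) (Bv d D j (bv d v j))) - cmod (cip L (Bv d D i a) w)"
    unfolding eq using abs_Re_le_cmod[of "\<Sum>j\<in>S-{i}. cip L (Bv d D i a) (Bv d D j (bv d v j))"] abs_Re_le_cmod[of "cip L (Bv d D i a) w"]
    by simp
  then have "mm * vnorm {..<d} c \<ge> mm * ((1 - (real d - 1) * nu L M d D - (real (card S) - 1) * real d * mu L M d D) * mm
     - sqrt (1 + (real d - 1) * nu L M d D) * vnorm {..<L} w)"
    using up c1 c2 c3 complex_Re_le_cmod[of "cip L (Bv d D i a) r"] unfolding cardS by (simp add: algebra_simps)
  moreover have "sqrt (1 + (real d - 1) * nu L M d D) * vnorm {..<L} w \<ge> 0"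
    using onepnu vnorm_nonneg by simp
  ultimately show ?thesis
    using mm0 vnorm_nonneg[of "{..<d}" c] unfolding c_def[symmetric] mm_def[symmetric] a_def[symmetric]
    by (cases "mm = 0") (auto simp: mult_le_cancel_left)
qed

end



context
  fixes L M d :: nat and D :: "nat \<Rightarrow> nat \<Rightarrow> complex"
  assumes d1: "d \<ge> 1" and unit: "\<forall>c<M*d. vnorm {..<L} (\<lambda>q. D q c) = 1"
begin

lemma E1:
  assumes sup: "supp_on M d I e" and IM: "I \<subseteq> {..<M}"
  shows "nsq {..<L} (mulv (M*d) D e) \<ge> (1 - (real d - 1) * nu L M d D - (real (card I) - 1) * real d * mu L M d D) * nsq {..<M*d} e"
proof -
  have fin: "finite I" using IM finite_subset by blast
  define B where "B = (\<lambda>i. Bv d D i (bv d e i))"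
  define s where "s = (\<lambda>i. vnorm {..<d} (bv d e i))"
  define T where "T = (\<Sum>i\<in>I. s i)"
  define Q where "Q = (\<Sum>i\<in>I. (s i)\<^sup>2)"
  define \<nu> where "\<nu> = nu L M d D"
  define \<mu> where "\<mu> = mu L M d D"
  have mu0: "\<mu> \<ge> 0" unfolding \<mu>_def by (rule mu_nonneg)
  have Qe: "Q = nsq {..<M*d} e"
    unfolding Q_def s_def vnorm_sq nsq_total[OF d1 unit sup IM] ..
  have "complex_of_real (nsq {..<L} (mulv (M*d) D e)) = cip L (mulv (M*d) D e) (mulv (M*d) D e)"
    by (simp add: cip_self)
  also have "\<dots> = cip L (\<lambda>q. \<Sum>i\<in>I. B i q) (\<lambda>q. \<Sum>j\<in>I. B j q)"
    unfolding B_def dec[OF d1 unit sup IM] ..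
  also have "\<dots> = (\<Sum>i\<in>I. \<Sum>j\<in>I. cip L (B i) (B j))"
    by (simp add: cip_sum_left cip_sum_right)
  finally have eq: "nsq {..<L} (mulv (M*d) D e) = (\<Sum>i\<in>I. Re (\<Sum>j\<in>I. cip L (B i) (B j)))"
    by (metis Re_complex_of_real Re_sum)
  have each: "Re (\<Sum>j\<in>I. cip L (B i) (B j)) \<ge> (1 - (real d - 1) * \<nu>) * (s i)\<^sup>2 - real d * \<mu> * s i * (T - s i)"
    if i: "i \<in> I" for i
  proof -
    have iM: "i < M" using i IM by auto
    have split: "(\<Sum>j\<in>I. cip L (B i) (B j)) = cip L (B i) (B i) + (\<Sum>j\<in>I-{i}. cip L (B i) (B j))"
      using fin i by (subst sum.remove[of I i]) auto
    have c1: "Re (cip L (B i) (B i)) \<ge> (1 - (real d - 1) * \<nu>) * (s i)\<^sup>2"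
      unfolding Re_cip_self B_def s_def \<nu>_def vnorm_sq using Bv_lower[OF d1 unit iM] by simp
    have "cmod (\<Sum>j\<in>I-{i}. cip L (B i) (B j)) \<le> (\<Sum>j\<in>I-{i}. cmod (cip L (B i) (B j)))" by (rule norm_sum)
    also have "\<dots> \<le> (\<Sum>j\<in>I-{i}. real d * \<mu> * s i * s j)"
      unfolding B_def s_def \<mu>_def using IM iM d1 by (intro sum_mono cross) auto
    also have "\<dots> = real d * \<mu> * s i * (T - s i)"
      unfolding T_def using fin i by (simp add: sum_distrib_left sum.remove[of I i] algebra_simps)
    finally have c2: "cmod (\<Sum>j\<in>I-{i}. cip L (B i) (B j)) \<le> real d * \<mu> * s i * (T - s i)" .
    show ?thesis unfolding split using c1 c2 abs_Re_le_cmod[of "\<Sum>j\<in>I-{i}. cip L (B i) (B j)"] by simp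
  qed
  have "nsq {..<L} (mulv (M*d) D e) \<ge> (\<Sum>i\<in>I. (1 - (real d - 1) * \<nu>) * (s i)\<^sup>2 - real d * \<mu> * s i * (T - s i))"
    unfolding eq by (rule sum_mono) (rule each)
  also have "(\<Sum>i\<in>I. (1 - (real d - 1) * \<nu>) * (s i)\<^sup>2 - real d * \<mu> * s i * (T - s i))
      = (1 - (real d - 1) * \<nu>) * Q - real d * \<mu> * (T * T - Q)"
  proof -
    have "(\<Sum>i\<in>I. (1 - (real d - 1) * \<nu>) * (s i)\<^sup>2 - real d * \<mu> * s i * (T - s i))
       = (\<Sum>i\<in>I. ((1 - (real d - 1) * \<nu>) + real d * \<mu>) * (s i)\<^sup>2 - (real d * \<mu> * T) * s i)"
      by (rule sum.cong[OF refl]) (simp add: algebra_simps power2_eq_square)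
    also have "\<dots> = ((1 - (real d - 1) * \<nu>) + real d * \<mu>) * Q - (real d * \<mu> * T) * T"
      unfolding sum_subtractf sum_distrib_left[symmetric] Q_def T_def ..
    finally show ?thesis by (simp add: algebra_simps)
  qed
  finally have g1: "nsq {..<L} (mulv (M*d) D e) \<ge> (1 - (real d - 1) * \<nu>) * Q - real d * \<mu> * (T * T - Q)" .
  have "T * T \<le> real (card I) * Q"
    using Cauchy_Schwarz_ineq_sum[of "\<lambda>_. 1::real" s I] unfolding T_def Q_def by (simp add: power2_eq_square)
  then have "real d * \<mu> * (T * T - Q) \<le> real d * \<mu> * (real (card I) * Q - Q)"
    using mu0 by (intro mult_left_mono) auto
  then show ?thesis using g1 unfolding Qe[symmetric] \<nu>_def[symmetric] \<mu>_def[symmetric] by (simp add: algebra_simps)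
qed

end



lemma nsq_diff: "nsq A (\<lambda>q. a q - b q) = nsq A a - 2 * (\<Sum>q\<in>A. Re (cnj (b q) * a q)) + nsq A b"
proof -
  have "nsq A (\<lambda>q. a q - b q) = (\<Sum>q\<in>A. (cmod (a q))\<^sup>2 - 2 * Re (cnj (b q) * a q) + (cmod (b q))\<^sup>2)"
    unfolding nsq_def by (rule sum.cong[OF refl]) (simp only: cmod_power2, simp add: power2_eq_square algebra_simps)
  then show ?thesis unfolding nsq_def by (simp add: sum.distrib sum_subtractf sum_distrib_left)
qed

lemma Re_cip: "Re (cip n b a) = (\<Sum>q<n. Re (cnj (b q) * a q))"
  unfolding cip_def by (simp add: Re_sum)

lemma mulv_add: "mulv N D (\<lambda>c. f c + g c) q = mulv N D f q + mulv N D g q"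
  unfolding mulv_def by (simp add: distrib_left sum.distrib)

lemma mulv_scale: "mulv N D (\<lambda>c. t * f c) q = t * mulv N D f q"
  unfolding mulv_def by (simp add: sum_distrib_left ac_simps)

lemma mulv_diff: "mulv N D (\<lambda>c. f c - g c) q = mulv N D f q - mulv N D g q"
  unfolding mulv_def by (simp add: right_diff_distrib sum_subtractf)

lemma mulv_delta: "c < N \<Longrightarrow> mulv N D (\<lambda>c'. if c' = c then t else 0) q = D q c * t"
proof -
  assume cN: "c < N"
  have h: "(\<lambda>c'. D q c' * (if c' = c then t else 0)) = (\<lambda>c'. if c' = c then D q c * t else 0)" by auto
  show ?thesis unfolding mulv_def h using cN by (simp add: sum.delta')
qed

lemma orth:
  assumes sT: "supp_on M d T xl"
    and opt: "\<forall>z. supp_on M d T z \<longrightarrow> vnorm {..<L} (\<lambda>q. y q - mulv (M*d) D xl q) \<le> vnorm {..<L} (\<lambda>q. y q - mulv (M*d) D z q)"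
    and unit: "\<forall>c<M*d. vnorm {..<L} (\<lambda>q. D q c) = 1"
    and iT: "i \<in> T" and TM: "T \<subseteq> {..<M}" and a': "a' < d"
  shows "bcorr L d D (\<lambda>q. y q - mulv (M*d) D xl q) i a' = 0"
proof -
  define r where "r = (\<lambda>q. y q - mulv (M*d) D xl q)"
  define c where "c = i*d + a'"
  define col where "col = (\<lambda>q. D q c)"
  define t where "t = bcorr L d D r i a'"
  have iM: "i < M" using iT TM by auto
  have cN: "c < M*d"
  proof -
    have "c < (i+1)*d" unfolding c_def using a' by simp
    also have "\<dots> \<le> M*d" using iM by (intro mult_right_mono) auto
    finally show ?thesis .
  qed
  have cdiv: "c div d = i" unfolding c_def using a' by simp
  have t_cip: "t = cip L col r" unfolding t_def bcorr_def cip_def col_def c_def ..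
  have ncol: "nsq {..<L} col = 1" using unit cN vnorm_sq[of "{..<L}" col] unfolding col_def by simp
  define z where "z = (\<lambda>c'. xl c' + (if c' = c then t else 0))"
  have sz: "supp_on M d T z" using sT cN cdiv iT unfolding supp_on_def z_def by auto
  have rz: "(\<lambda>q. y q - mulv (M*d) D z q) = (\<lambda>q. r q - t * col q)"
    unfolding z_def r_def col_def by (auto simp: mulv_add mulv_delta[OF cN])
  have "vnorm {..<L} r \<le> vnorm {..<L} (\<lambda>q. y q - mulv (M*d) D z q)"
    using opt sz unfolding r_def by blast
  also have "\<dots> = vnorm {..<L} (\<lambda>q. r q - t * col q)" using rz by simp
  finally have "vnorm {..<L} r \<le> vnorm {..<L} (\<lambda>q. r q - t * col q)" .
  then have "nsq {..<L} r \<le> nsq {..<L} (\<lambda>q. r q - t * col q)"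
    unfolding vnorm_nsq using nsq_nonneg by simp
  also have "\<dots> = nsq {..<L} r - 2 * Re (cnj t * t) + (cmod t)\<^sup>2"
    unfolding nsq_diff nsq_scale ncol t_cip
    by (simp add: cip_def Re_sum[symmetric] sum_distrib_left mult.assoc)
  also have "Re (cnj t * t) = (cmod t)\<^sup>2"
    by (simp only: cmod_power2) (simp add: power2_eq_square)
  finally have "(cmod t)\<^sup>2 \<le> 0" by simp
  then have "t = 0" by simp
  then show ?thesis unfolding t_def r_def .
qed

lemma lsq_err:
  assumes sT: "supp_on M d T xk" and sx: "supp_on M d T x"
    and opt: "\<forall>z. supp_on M d T z \<longrightarrow> vnorm {..<L} (\<lambda>q. y q - mulv (M*d) D xk q) \<le> vnorm {..<L} (\<lambda>q. y q - mulv (M*d) D z q)"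
    and obs: "\<forall>q<L. y q = mulv (M*d) D x q + w q"
  shows "vnorm {..<L} (mulv (M*d) D (\<lambda>c. xk c - x c)) \<le> vnorm {..<L} w"
proof -
  define e where "e = (\<lambda>c. xk c - x c)"
  define De where "De = mulv (M*d) D e"
  define A where "A = nsq {..<L} De"
  define B where "B = Re (cip L De w)"
  have A0: "A \<ge> 0" unfolding A_def by (rule nsq_nonneg)
  have key: "nsq {..<L} w - 2 * B + A \<le> nsq {..<L} w - 2 * t * B + t\<^sup>2 * A" for t :: real
  proof -
    define z where "z = (\<lambda>c. x c + complex_of_real t * e c)"
    have sz: "supp_on M d T z" using sT sx unfolding supp_on_def z_def e_def by auto
    have r1: "nsq {..<L} (\<lambda>q. y q - mulv (M*d) D xk q) = nsq {..<L} (\<lambda>q. w q - De q)"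
    proof (rule nsq_cong)
      fix q assume "q \<in> {..<L}"
      then have "y q = mulv (M*d) D x q + w q" using obs by auto
      moreover have "xk = (\<lambda>c. x c + e c)" unfolding e_def by auto
      ultimately show "y q - mulv (M*d) D xk q = w q - De q" unfolding De_def by (simp add: mulv_add)
    qed
    have r2: "nsq {..<L} (\<lambda>q. y q - mulv (M*d) D z q) = nsq {..<L} (\<lambda>q. w q - complex_of_real t * De q)"
    proof (rule nsq_cong)
      fix q assume "q \<in> {..<L}"
      then have "y q = mulv (M*d) D x q + w q" using obs by auto
      then show "y q - mulv (M*d) D z q = w q - complex_of_real t * De q" unfolding De_def z_def by (simp add: mulv_add mulv_scale)
    qed
    have "vnorm {..<L} (\<lambda>q. y q - mulv (M*d) D xk q) \<le> vnorm {..<L} (\<lambda>q. y q - mulv (M*d) D z q)"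
      using opt sz by blast
    then have "nsq {..<L} (\<lambda>q. w q - De q) \<le> nsq {..<L} (\<lambda>q. w q - complex_of_real t * De q)"
      unfolding vnorm_nsq r1[symmetric] r2[symmetric] using nsq_nonneg by simp
    moreover have "nsq {..<L} (\<lambda>q. w q - De q) = nsq {..<L} w - 2 * B + A"
      unfolding nsq_diff A_def B_def Re_cip by simp
    moreover have "nsq {..<L} (\<lambda>q. w q - complex_of_real t * De q) = nsq {..<L} w - 2 * t * B + t\<^sup>2 * A"
      unfolding nsq_diff A_def B_def Re_cip nsq_scale
      by (simp add: sum_distrib_left mult.assoc)
    ultimately show ?thesis by simp
  qed
  have AB: "A \<le> B"
  proof (cases "A = 0")
    case True
    have "B \<ge> 0" using key[of 0] True by simp
    then show ?thesis using True by simp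
  next
    case False
    then have Ap: "A > 0" using A0 by simp
    have "nsq {..<L} w - 2 * B + A \<le> nsq {..<L} w - 2 * (B/A) * B + (B/A)\<^sup>2 * A" by (rule key)
    then have "A * (A - 2*B) \<le> A * (- B*B/A)" using Ap by (simp add: power2_eq_square field_simps)
    then have "(A - B)\<^sup>2 \<le> 0" using Ap by (simp add: power2_eq_square field_simps)
    then show ?thesis by simp
  qed
  have "B \<le> cmod (cip L De w)" unfolding B_def by (rule complex_Re_le_cmod)
  also have "\<dots> \<le> vnorm {..<L} De * vnorm {..<L} w" by (rule cip_CS)
  finally have "(vnorm {..<L} De)\<^sup>2 \<le> vnorm {..<L} De * vnorm {..<L} w"
    using AB unfolding A_def vnorm_sq by simp
  then have "vnorm {..<L} De \<le> vnorm {..<L} w \<or> vnorm {..<L} De = 0"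
    using vnorm_nonneg[of "{..<L}" De] by (auto simp: power2_eq_square)
  then show ?thesis using vnorm_nonneg[of "{..<L}" w] unfolding De_def e_def by auto
qed



lemma run_step:
  assumes "bomp_run L M d D k y idx xs" "l \<in> {1..k}"
  shows "idx l < M"
    "\<forall>i<M. vnorm {..<d} (bcorr L d D (\<lambda>q. y q - mulv (M*d) D (xs (l-1)) q) i)
        \<le> vnorm {..<d} (bcorr L d D (\<lambda>q. y q - mulv (M*d) D (xs (l-1)) q) (idx l))"
    "supp_on M d (idx ` {1..l}) (xs l)"
    "\<forall>z. supp_on M d (idx ` {1..l}) z \<longrightarrow> vnorm {..<L} (\<lambda>q. y q - mulv (M*d) D (xs l) q) \<le> vnorm {..<L} (\<lambda>q. y q - mulv (M*d) D z q)"
  using assms unfolding bomp_run_def supp_on_def Let_def by auto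

lemma supp_on_mono: "supp_on M d A v \<Longrightarrow> A \<subseteq> B \<Longrightarrow> supp_on M d B v"
  unfolding supp_on_def by auto

lemma supp_on_zero: "supp_on M d A (\<lambda>_. 0)"
  unfolding supp_on_def by auto



theorem theorem2:
  fixes L M d k :: nat
    and D :: "nat \<Rightarrow> nat \<Rightarrow> complex"
    and x w y :: "nat \<Rightarrow> complex"
    and \<epsilon> :: real
    and idx :: "nat \<Rightarrow> nat"
    and xs :: "nat \<Rightarrow> nat \<Rightarrow> complex"
  assumes d_pos: "d \<ge> 1"
    and L_lt_N: "L < M * d"
    and unit_cols: "\<forall>c < M * d. vnorm {..<L} (\<lambda>q. D q c) = 1"
    and full_rank: "\<forall>I. I \<subseteq> {..<M} \<and> card I \<le> k \<longrightarrow>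
        (\<forall>c. (\<forall>j. j \<notin> (\<Union>i\<in>I. blk d i) \<longrightarrow> c j = 0) \<longrightarrow>
             (\<forall>q<L. (\<Sum>j < M * d. D q j * c j) = 0) \<longrightarrow> (\<forall>j. c j = 0))"
    and x_dim: "\<forall>c \<ge> M * d. x c = 0"
    and x_sparse: "card (bsupp M d x) \<le> k"
    and x_nz: "x \<noteq> (\<lambda>_. 0)"
    and obs: "\<forall>q<L. y q = mulv (M * d) D x q + w q"
    and eps_pos: "\<epsilon> > 0"
    and noise: "vnorm {..<L} w \<le> \<epsilon>"
    and cond: "(1 - (real d - 1) * sub_coherence L M d D) * Min ((\<lambda>i. vnorm (blk d i) x) ` bsupp M d x)
       > 2 * \<epsilon> * sqrt (1 + (real d - 1) * sub_coherence L M d D)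
         + (2 * real k - 1) * real d * block_coherence L M d D * Min ((\<lambda>i. vnorm (blk d i) x) ` bsupp M d x)"
    and run: "bomp_run L M d D k y idx xs"
  shows "bsupp M d x \<subseteq> idx ` {1..k}
    \<and> (vnorm {..<M * d} (\<lambda>c. xs k c - x c))\<^sup>2
        \<le> \<epsilon>\<^sup>2 / (1 - (real d - 1) * sub_coherence L M d D - (real k - 1) * real d * block_coherence L M d D)"
proof -
  define S where "S = bsupp M d x"
  define \<nu> where "\<nu> = sub_coherence L M d D"
  define \<mu> where "\<mu> = block_coherence L M d D"
  define xmin where "xmin = Min ((\<lambda>i. vnorm (blk d i) x) ` S)"
  define sq where "sq = sqrt (1 + (real d - 1) * \<nu>)"
  define \<gamma> where "\<gamma> = 1 - (real d - 1) * \<nu> - (2 * real k - 1) * real d * \<mu>"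
  define T where "T = (\<lambda>l. idx ` {1..l})"
  have nu0: "\<nu> \<ge> 0" unfolding \<nu>_def by (rule nu_nonneg)
  have mu0: "\<mu> \<ge> 0" unfolding \<mu>_def by (rule mu_nonneg)
  have sq0: "sq \<ge> 0" unfolding sq_def \<nu>_def using onepnu[OF d_pos unit_cols] by simp
  have SM: "S \<subseteq> {..<M}" unfolding S_def bsupp_def by auto
  have finS: "finite S" using SM finite_subset by blast
  have div_blk: "c < M*d \<Longrightarrow> c div d < M \<and> c \<in> blk d (c div d)" for c
  proof -
    assume c: "c < M*d"
    have m1: "c div d < M" using c d_pos by (simp add: div_less_iff_less_mult)
    have e1: "c = c div d * d + c mod d" by simp
    have "c mod d < d" using d_pos by simp
    moreover have "(c div d + 1) * d = c div d * d + d" by simp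
    ultimately have "c div d * d \<le> c" "c < (c div d + 1) * d" using e1 by linarith+
    then show ?thesis using m1 unfolding blk_def by auto
  qed
  have xsupp: "supp_on M d S x"
    unfolding supp_on_def
  proof (intro allI impI)
    fix c assume h: "M*d \<le> c \<or> c div d \<notin> S"
    show "x c = 0"
    proof (cases "M*d \<le> c")
      case True then show ?thesis using x_dim by auto
    next
      case False
      then have "c div d < M \<and> c \<in> blk d (c div d)" using div_blk by auto
      then show ?thesis using h False unfolding S_def bsupp_def by auto
    qed
  qed
  have Sne: "S \<noteq> {}"
  proof
    assume "S = {}"
    then have "x c = 0" for c using xsupp unfolding supp_on_def by auto
    then show False using x_nz by auto
  qed
  have k1: "k \<ge> 1" using x_sparse Sne finS unfolding S_def[symmetric]
    by (metis card_0_eq less_one not_le order_less_le_trans)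
  have blkpos: "vnorm (blk d i) x > 0" if i: "i \<in> S" for i
  proof -
    obtain c where c: "c \<in> blk d i" "x c \<noteq> 0" using i unfolding S_def bsupp_def by auto
    have "(cmod (x c))\<^sup>2 \<le> nsq (blk d i) x" unfolding nsq_def using c
      by (intro member_le_sum) (auto simp: blk_def)
    then have "nsq (blk d i) x > 0" using c(2)
      by (metis order_less_le_trans zero_less_norm_iff zero_less_power)
    then show ?thesis unfolding vnorm_nsq by simp
  qed
  have xmin_le: "xmin \<le> vnorm (blk d i) x" if "i \<in> S" for i
    unfolding xmin_def using finS that by (intro Min_le) auto
  have xmin_pos: "xmin > 0"
  proof -
    have "xmin \<in> (\<lambda>i. vnorm (blk d i) x) ` S" unfolding xmin_def using finS Sne by (intro Min_in) auto
    then show ?thesis using blkpos by auto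
  qed
  have cond': "\<gamma> * xmin > 2 * \<epsilon> * sq"
    using cond unfolding \<gamma>_def S_def[symmetric] xmin_def[symmetric] \<nu>_def[symmetric] \<mu>_def[symmetric] sq_def[symmetric]
    by (simp add: algebra_simps)
  have gamma_pos: "\<gamma> > 0"
  proof -
    have "2 * \<epsilon> * sq \<ge> 0" using eps_pos sq0 by simp
    then have "\<gamma> * xmin > 0" using cond' by linarith
    then show ?thesis using xmin_pos by (simp add: zero_less_mult_iff)
  qed
  have nw: "vnorm {..<L} w \<le> \<epsilon>" by (rule noise)
  have cardS: "card S \<le> k" unfolding S_def by (rule x_sparse)
  have inv: "l \<le> k \<Longrightarrow> S \<subseteq> T l \<or> (T l \<subseteq> S \<and> card (T l) = l)" for l
  proof (induction l)
    case 0
    then show ?case unfolding T_def by simp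
  next
    case (Suc l)
    then have lk: "l \<le> k" and IH: "S \<subseteq> T l \<or> (T l \<subseteq> S \<and> card (T l) = l)" by auto
    have TSuc: "T (Suc l) = insert (idx (Suc l)) (T l)" unfolding T_def
      by (simp add: atLeastAtMostSuc_conv)
    show ?case
    proof (cases "S \<subseteq> T l")
      case True
      then show ?thesis unfolding TSuc by auto
    next
      case notsub: False
      then have TS: "T l \<subseteq> S" and cardT: "card (T l) = l" using IH by auto
      have stepS: "Suc l \<in> {1..k}" using Suc.prems by auto
      note st = run_step[OF run stepS]
      define r where "r = (\<lambda>q. y q - mulv (M*d) D (xs l) q)"
      define v where "v = (\<lambda>c. x c - xs l c)"
      have xs_supp: "supp_on M d (T l) (xs l)"
      proof (cases "l = 0")
        case True
        then show ?thesis using run unfolding bomp_run_def by (simp add: supp_on_zero)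
      next
        case False
        then show ?thesis using run_step(3)[OF run, of l] lk unfolding T_def by auto
      qed
      have vsupp: "supp_on M d S v"
        using xsupp supp_on_mono[OF xs_supp TS] unfolding supp_on_def v_def by auto
      have rv: "r q = mulv (M*d) D v q + w q" if "q < L" for q
        unfolding r_def v_def using obs that by (simp add: mulv_diff)
      define f where "f = (\<lambda>i. vnorm {..<d} (bv d v i))"
      obtain j0 where j0: "j0 \<in> S" "j0 \<notin> T l" using notsub by auto
      have fj0: "f j0 \<ge> xmin"
      proof -
        have "bv d v j0 b = bv d x j0 b" if "b < d" for b
          using bv_zero[OF d_pos unit_cols xs_supp j0(2) that] unfolding bv_def v_def by simp
        then have "f j0 = vnorm {..<d} (bv d x j0)" unfolding f_def vnorm_def by simp
        also have "\<dots> = vnorm (blk d j0) x" by (simp add: vnorm_blk)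
        finally show ?thesis using xmin_le[OF j0(1)] by simp
      qed
      obtain istar where istar: "istar \<in> S" "f istar = Max (f ` S)"
        using finS Sne by (metis (mono_tags, lifting) Max_in finite_imageI image_iff image_is_empty)
      have fmax: "f j \<le> f istar" if "j \<in> S" for j
        unfolding istar(2) using finS that by (intro Max_ge) auto
      define m where "m = f istar"
      have m_ge: "m \<ge> xmin" unfolding m_def using fmax[OF j0(1)] fj0 by linarith
      have m0: "m \<ge> 0" using m_ge xmin_pos by linarith
      have lowb: "vnorm {..<d} (bcorr L d D r istar) \<ge> (1 - (real d - 1) * \<nu> - (real (card S) - 1) * real d * \<mu>) * m - sq * vnorm {..<L} w"
        unfolding m_def f_def \<nu>_def \<mu>_def sq_def
        by (rule E2[OF d_pos unit_cols vsupp SM finS rv istar(1)]) (use fmax f_def in auto)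
      have upb: "vnorm {..<d} (bcorr L d D r j) \<le> real (card S) * real d * \<mu> * m + sq * vnorm {..<L} w"
        if "j < M" "j \<notin> S" for j
        unfolding \<mu>_def sq_def \<nu>_def
        by (rule E3[OF d_pos unit_cols vsupp SM rv that(1) that(2) _ m0]) (use fmax f_def m_def in auto)
      have cS: "real (card S) \<le> real k" using cardS by simp
      have coef: "1 - (real d - 1) * \<nu> - (real (card S) - 1) * real d * \<mu> \<ge> \<gamma> + real (card S) * real d * \<mu>"
      proof -
        have h: "real (card S) * real d * \<mu> \<le> real k * real d * \<mu>" using cS mu0 by (intro mult_right_mono) auto
        have h1: "(2*real k - 1)*real d*\<mu> = 2*(real k*real d*\<mu>) - real d*\<mu>" by (simp add: algebra_simps)
        have h2: "(real (card S) - 1)*real d*\<mu> = real (card S)*real d*\<mu> - real d*\<mu>" by (simp add: algebra_simps)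
        show ?thesis unfolding \<gamma>_def h1 h2 using h by linarith
      qed
      have gm: "\<gamma> * m \<ge> \<gamma> * xmin" using m_ge gamma_pos by simp
      have sqw: "sq * vnorm {..<L} w \<le> sq * \<epsilon>" using nw sq0 by (simp add: mult_left_mono)
      have big: "(1 - (real d - 1) * \<nu> - (real (card S) - 1) * real d * \<mu>) * m - sq * vnorm {..<L} w
          > real (card S) * real d * \<mu> * m + sq * vnorm {..<L} w"
      proof -
        have "(1 - (real d - 1) * \<nu> - (real (card S) - 1) * real d * \<mu>) * m \<ge> (\<gamma> + real (card S) * real d * \<mu>) * m"
          using coef m0 by (simp add: mult_right_mono)
        then show ?thesis using gm cond' sqw by (simp add: algebra_simps)
      qed
      have greedy: "vnorm {..<d} (bcorr L d D r istar) \<le> vnorm {..<d} (bcorr L d D r (idx (Suc l)))"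
        using st(2) istar(1) SM unfolding r_def by auto
      have inS: "idx (Suc l) \<in> S"
      proof (rule ccontr)
        assume "idx (Suc l) \<notin> S"
        then have "vnorm {..<d} (bcorr L d D r (idx (Suc l))) \<le> real (card S) * real d * \<mu> * m + sq * vnorm {..<L} w"
          using upb st(1) by auto
        then show False using lowb greedy big by linarith
      qed
      have notT: "idx (Suc l) \<notin> T l"
      proof
        assume iT: "idx (Suc l) \<in> T l"
        then have l0: "l \<ge> 1" unfolding T_def by auto
        note stl = run_step[OF run, of l]
        have "bcorr L d D r (idx (Suc l)) a' = 0" if "a' < d" for a'
          unfolding r_def
          by (rule orth[OF stl(3) stl(4) unit_cols, unfolded T_def[symmetric]])
             (use l0 lk iT TS SM that in \<open>auto simp: T_def\<close>)
        then have "vnorm {..<d} (bcorr L d D r (idx (Suc l))) = 0" unfolding vnorm_def by simp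
        moreover have "(1 - (real d - 1) * \<nu> - (real (card S) - 1) * real d * \<mu>) * m - sq * vnorm {..<L} w > 0"
          using big mu0 m0 sq0 vnorm_nonneg[of "{..<L}" w] by (smt (verit) mult_nonneg_nonneg of_nat_0_le_iff)
        ultimately show False using lowb greedy by linarith
      qed
      have "T (Suc l) \<subseteq> S" using TSuc TS inS by auto
      moreover have "card (T (Suc l)) = Suc l"
        unfolding TSuc using notT cardT finS TS finite_subset by (metis card_insert_disjoint)
      ultimately show ?thesis by auto
    qed
  qed
  have STk: "S \<subseteq> T k"
  proof -
    have "S \<subseteq> T k \<or> (T k \<subseteq> S \<and> card (T k) = k)" using inv by auto
    then show ?thesis
    proof
      assume h: "T k \<subseteq> S \<and> card (T k) = k"
      then have "T k = S" using card_subset_eq[OF finS] cardS by (metis antisym card_mono finS)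
      then show ?thesis by simp
    qed
  qed
  have kk: "k \<in> {1..k}" using k1 by auto
  note stk = run_step[OF run kk]
  have TkM: "T k \<subseteq> {..<M}" using run_step(1)[OF run] unfolding T_def by auto
  have cardTk: "card (T k) \<le> k" unfolding T_def using card_image_le[of "{1..k}" idx] by simp
  define e where "e = (\<lambda>c. xs k c - x c)"
  have esupp: "supp_on M d (T k) e"
    using stk(3) supp_on_mono[OF xsupp STk] unfolding supp_on_def e_def T_def by auto
  have De: "vnorm {..<L} (mulv (M*d) D e) \<le> \<epsilon>"
    using lsq_err[OF stk(3) supp_on_mono[OF xsupp STk, unfolded T_def] stk(4) obs] nw unfolding e_def by linarith
  define lam where "lam = 1 - (real d - 1) * \<nu> - (real k - 1) * real d * \<mu>"
  have lam_pos: "lam \<ge> \<gamma>" unfolding lam_def \<gamma>_def using mu0 d_pos k1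
    by (simp add: algebra_simps mult_right_mono)
  have E1': "nsq {..<L} (mulv (M*d) D e) \<ge> (1 - (real d - 1) * \<nu> - (real (card (T k)) - 1) * real d * \<mu>) * nsq {..<M*d} e"
    unfolding \<nu>_def \<mu>_def by (rule E1[OF d_pos unit_cols esupp TkM])
  have "(1 - (real d - 1) * \<nu> - (real (card (T k)) - 1) * real d * \<mu>) \<ge> lam"
    unfolding lam_def using cardTk mu0 d_pos by (simp add: algebra_simps, intro mult_left_mono, auto)
  then have "lam * nsq {..<M*d} e \<le> nsq {..<L} (mulv (M*d) D e)"
    using E1' nsq_nonneg[of "{..<M*d}" e] by (meson mult_right_mono order_trans)
  also have "\<dots> \<le> \<epsilon>\<^sup>2"
    using De vnorm_nonneg[of "{..<L}" "mulv (M*d) D e"] unfolding vnorm_sq[symmetric]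
    by (simp add: power_mono)
  finally have "nsq {..<M*d} e \<le> \<epsilon>\<^sup>2 / lam" using lam_pos gamma_pos by (simp add: field_simps)
  then show ?thesis
    using STk unfolding S_def T_def e_def lam_def \<nu>_def \<mu>_def vnorm_sq by simp
qed

end
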